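(* Let $k\ge d$ and $(\mathbf x_1,\dots,\mathbf x_k)\sim\mathrm{VS}_{D_{\mathcal X}}^k$, with $\mathbf X\in\mathbb R^{k\times d}$ the matrix with rows $\mathbf x_i^\top$. Given $\mathbf X$, choose a subset $S\subseteq\{1,\dots,k\}$ with $|S|=d$ by standard volume sampling, i.e. with probability $\det(\mathbf X_S)^2/\det(\mathbf X^\top\mathbf X)$, and list the points $\{\mathbf x_i\}_{i\in S}$ in uniformly random order as $(\mathbf x_{i_1},\dots,\mathbf x_{i_d})$. Then $(\mathbf x_{i_1},\dots,\mathbf x_{i_d})\sim\mathrm{VS}_{D_{\mathcal X}}^d$.
   Context: $D_{\mathcal X}$ is a probability distribution on $\mathbb R^d$ with $\mathbb E\|\mathbf x\|^2<\infty$ and invertible $\boldsymbol\Sigma_{D_{\mathcal X}}:=\mathbb E[\mathbf x\mathbf x^\top]$; $D_{\mathcal X}^k$ is the law of $k$ i.i.d. draws. For $k\ge d$, $\mathrm{VS}_{D_{\mathcal X}}^k(A)=\mathbb E_{D_{\mathcal X}^k}[\mathbf 1_A\det(\sum_{i=1}^k\mathbf x_i\mathbf x_i^\top)]/\big(d!\binom kd\det(\boldsymbol\Sigma_{D_{\mathcal X}})\big)$. $\mathbf X_S$ is the $d\times d$ submatrix of rows indexed by $S$. (Under $\mathrm{VS}_{D_{\mathcal X}}^k$, $\det(\mathbf X^\top\mathbf X)>0$ almost surely.) *)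

theory Defs
  imports "HOL-Probability.Probability"
begin

definition second_moment :: "(real^'d::finite) measure \<Rightarrow> real^'d^'d" where
  "second_moment D = (\<chi> i j. \<integral>x. x$i * x$j \<partial>D)"

definition outer :: "real^'d::finite \<Rightarrow> real^'d \<Rightarrow> real^'d^'d" where
  "outer x y = (\<chi> i j. x$i * y$j)"

text \<open>Sum over I of x_i x_i^T, i.e. X_I^T X_I.\<close>
definition gram :: "(nat \<Rightarrow> real^'d::finite) \<Rightarrow> nat set \<Rightarrow> real^'d^'d" where
  "gram X I = (\<Sum>i\<in>I. outer (X i) (X i))"

text \<open>A fixed enumeration of the index type 'd by 0..d-1 (used only to order rows).\<close>
definition idx :: "'d::finite \<Rightarrow> nat" where
  "idx = (SOME f. bij_betw f (UNIV :: 'd set) {..<CARD('d)})"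

definition submat :: "(nat \<Rightarrow> real^'d::finite) \<Rightarrow> nat set \<Rightarrow> real^'d^'d" where
  "submat X S = (\<chi> r. X (sorted_list_of_set S ! idx r))"

definition VS :: "(real^'d::finite) measure \<Rightarrow> nat \<Rightarrow> (nat \<Rightarrow> real^'d) measure" where
  "VS D k = density (PiM {..<k} (\<lambda>_. D))
     (\<lambda>X. ennreal (det (gram X {..<k}) /
            (fact CARD('d) * real (k choose CARD('d)) * det (second_moment D))))"

end

theory Submission
  imports Defs "HOL-Combinatorics.Permutations"
begin

lemma det_nz_ker:
  fixes A :: "real^'n^'n"
  shows "det A \<noteq> 0 \<longleftrightarrow> (\<forall>x. A *v x = 0 \<longrightarrow> x = 0)"
  by (metis invertible_det_nz invertible_left_inverse matrix_left_invertible_ker)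

lemma idx_bij: "bij_betw (idx :: 'd::finite \<Rightarrow> nat) UNIV {..<CARD('d)}"
proof -
  have "\<exists>f. bij_betw f (UNIV :: 'd set) {..<CARD('d)}"
    by (rule finite_same_card_bij) auto
  then show ?thesis unfolding idx_def by (rule someI_ex)
qed

lemma gram_component: "gram X K $ i $ j = (\<Sum>l\<in>K. X l $ i * X l $ j)"
  by (simp add: gram_def outer_def sum_component)

lemma gram_eq:
  fixes X :: "nat \<Rightarrow> real^'d::finite"
  assumes "bij_betw \<sigma> {..<CARD('d)} S"
  shows "gram X S = transpose (\<chi> r. X (\<sigma> (idx r)) :: real^'d^'d) ** (\<chi> r. X (\<sigma> (idx r)))"
proof -
  have b: "bij_betw (\<sigma> \<circ> idx) (UNIV::'d set) S"
    using bij_betw_trans[OF idx_bij assms] .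
  have "gram X S $ i $ j = (\<Sum>r\<in>(UNIV::'d set). X ((\<sigma> \<circ> idx) r) $ i * X ((\<sigma> \<circ> idx) r) $ j)" for i j
    unfolding gram_component using sum.reindex_bij_betw[OF b, of "\<lambda>l. X l $ i * X l $ j"] by (simp add: eq_commute)
  then show ?thesis
    by (simp add: vec_eq_iff matrix_matrix_mult_def transpose_def)
qed

lemma det_gram_sq:
  fixes X :: "nat \<Rightarrow> real^'d::finite"
  assumes "bij_betw \<sigma> {..<CARD('d)} S"
  shows "det (gram X S) = (det (\<chi> r. X (\<sigma> (idx r)) :: real^'d^'d))\<^sup>2"
  by (simp add: gram_eq[OF assms] det_mul power2_eq_square)

lemma quad_outer: "v \<bullet> (outer x x *v v) = (x \<bullet> v)\<^sup>2"
  by (simp add: inner_vec_def outer_def matrix_vector_mult_def power2_eq_square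
      sum_product sum_distrib_left algebra_simps)

lemma quad_gram:
  assumes "finite K"
  shows "v \<bullet> (gram X K *v v) = (\<Sum>i\<in>K. (X i \<bullet> v)\<^sup>2)"
  using assms
proof (induction K rule: finite_induct)
  case empty
  then show ?case by (simp add: gram_def)
next
  case (insert i K)
  then show ?case
    by (simp add: gram_def matrix_vector_mult_add_rdistrib inner_add_right quad_outer)
qed

lemma pd_det_pos:
  fixes G :: "real^'n^'n"
  assumes pd: "\<And>v. v \<noteq> 0 \<Longrightarrow> 0 < v \<bullet> (G *v v)"
  shows "0 < det G"
proof (rule ccontr)
  assume neg: "\<not> 0 < det G"
  define F where "F t = (\<chi> i j. t * G$i$j + (1-t) * (if i = j then 1 else 0))" for t :: real
  have quadF: "v \<bullet> (F t *v v) = t * (v \<bullet> (G *v v)) + (1-t) * (v \<bullet> v)" for t v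
  proof -
    have "F t *v v = t *\<^sub>R (G *v v) + (1-t) *\<^sub>R v"
    proof -
      have "(\<Sum>j\<in>UNIV. (t * G$i$j + (1-t) * (if i = j then 1 else 0)) * v$j)
          = t * (\<Sum>j\<in>UNIV. G$i$j * v$j) + (1-t) * v$i" for i
      proof -
        have "(\<Sum>j\<in>UNIV. (t * G$i$j + (1-t) * (if i = j then 1 else 0)) * v$j)
          = (\<Sum>j\<in>UNIV. t * (G$i$j * v$j)) + (\<Sum>j\<in>UNIV. (1-t) * ((if i = j then 1 else 0) * v$j))"
          by (simp only: sum.distrib[symmetric] distrib_right mult.assoc)
        also have "(\<Sum>j\<in>UNIV. (1-t) * ((if i = j then 1 else 0) * v$j)) = (1-t) * v$i"
          by (simp add: sum_distrib_left[symmetric] if_distrib[of "\<lambda>x. x * v$_"] cong: if_cong)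
        finally show ?thesis by (simp add: sum_distrib_left)
      qed
      then show ?thesis by (simp add: F_def matrix_vector_mult_def vec_eq_iff)
    qed
    then show ?thesis by (simp add: inner_add_right)
  qed
  have nz: "det (F t) \<noteq> 0" if t: "0 \<le> t" "t \<le> 1" for t
    unfolding det_nz_ker
  proof (intro allI impI)
    fix x assume x: "F t *v x = 0"
    show "x = 0"
    proof (rule ccontr)
      assume "x \<noteq> 0"
      then have a: "0 < x \<bullet> (G *v x)" "0 < x \<bullet> x" using pd by auto
      have "0 < t * (x \<bullet> (G *v x)) + (1-t) * (x \<bullet> x)"
      proof (cases "t = 0")
        case True then show ?thesis using a by simp
      next
        case False then show ?thesis using a t
          by (smt (verit) mult_nonneg_nonneg mult_pos_pos)
      qed
      then show False using quadF[of x t] x by simp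
    qed
  qed
  have cont: "continuous_on {0..1} (\<lambda>t. det (F t))"
    unfolding det_def F_def by (intro continuous_intros) 
  have F0: "det (F 0) = 1"
  proof -
    have "F 0 = mat 1" by (simp add: F_def vec_eq_iff mat_def)
    then show ?thesis by simp
  qed
  have F1: "det (F 1) = det G"
  proof -
    have "F 1 = G" by (simp add: F_def vec_eq_iff)
    then show ?thesis by simp
  qed
  obtain t where "0 \<le> t" "t \<le> 1" "det (F t) = 0"
    using IVT2'[of "\<lambda>t. det (F t)" 1 0 0, OF _ _ _ cont] F0 F1 neg by auto
  then show False using nz by blast
qed

lemma det_gram_pos:
  fixes X :: "nat \<Rightarrow> real^'d::finite"
  assumes b: "bij_betw \<sigma> {..<CARD('d)} S" and SK: "S \<subseteq> K" and K: "finite K"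
    and nz: "det (\<chi> r. X (\<sigma> (idx r)) :: real^'d^'d) \<noteq> 0"
  shows "0 < det (gram X K)"
proof (rule pd_det_pos)
  fix v :: "real^'d" assume v: "v \<noteq> 0"
  let ?M = "(\<chi> r. X (\<sigma> (idx r)) :: real^'d^'d)"
  have "?M *v v \<noteq> 0" using nz v det_nz_ker by blast
  then obtain r where r: "(?M *v v) $ r \<noteq> 0" by (auto simp: vec_eq_iff)
  then have ne: "X (\<sigma> (idx r)) \<bullet> v \<noteq> 0"
    by (simp add: matrix_vector_mult_def inner_vec_def mult.commute)
  have "idx r \<in> {..<CARD('d)}" using idx_bij bij_betwE by blast
  then have "\<sigma> (idx r) \<in> K" using b SK bij_betwE by blast
  then have "(X (\<sigma> (idx r)) \<bullet> v)\<^sup>2 \<le> (\<Sum>i\<in>K. (X i \<bullet> v)\<^sup>2)"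
    using K by (intro member_le_sum) auto
  moreover have "0 < (X (\<sigma> (idx r)) \<bullet> v)\<^sup>2" using ne by simp
  ultimately show "0 < v \<bullet> (gram X K *v v)" unfolding quad_gram[OF K] by linarith
qed

lemma meas_det_gram:
  fixes N :: "(nat \<Rightarrow> real^'d::finite) measure"
  assumes K: "finite K" and m: "\<And>l. l \<in> K \<Longrightarrow> (\<lambda>X. X l) \<in> borel_measurable N"
  shows "(\<lambda>X. det (gram X K)) \<in> borel_measurable N"
proof -
  have c: "(\<lambda>X. X l $ i) \<in> borel_measurable N" if "l \<in> K" for l i
    using measurable_compose[OF m[OF that] borel_measurable_nth] by simp
  show ?thesis
    unfolding det_def gram_component
    by (intro borel_measurable_sum borel_measurable_prod borel_measurable_times borel_measurable_const c)
qed

lemma card_bij_ext: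
  assumes S: "finite S" "card S = n"
  shows "card {\<pi>. bij_betw \<pi> {..<n} S \<and> \<pi> \<in> extensional {..<n}} = fact n"
proof -
  obtain s0 where s0: "bij_betw s0 {..<n} S"
    using finite_same_card_bij[of "{..<n}" S] S by auto
  define F where "F p = restrict (s0 \<circ> p) {..<n}" for p :: "nat \<Rightarrow> nat"
  let ?P = "{p. p permutes {..<n}}"
  let ?B = "{\<pi>. bij_betw \<pi> {..<n} S \<and> \<pi> \<in> extensional {..<n}}"
  have inj: "inj_on F ?P"
  proof (rule inj_onI)
    fix p q assume p: "p \<in> ?P" and q: "q \<in> ?P" and e: "F p = F q"
    show "p = q"
    proof
      fix j show "p j = q j"
      proof (cases "j < n")
        case True
        then have "s0 (p j) = s0 (q j)" using fun_cong[OF e, of j] by (simp add: F_def)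
        moreover have "p j \<in> {..<n}" "q j \<in> {..<n}"
          using p q True permutes_in_image by fastforce+
        ultimately show ?thesis using s0 by (auto simp: bij_betw_def inj_on_def)
      next
        case False
        then show ?thesis using p q by (simp add: permutes_not_in)
      qed
    qed
  qed
  have img: "F ` ?P = ?B"
  proof
    show "F ` ?P \<subseteq> ?B"
    proof
      fix \<pi> assume "\<pi> \<in> F ` ?P"
      then obtain p where p: "p permutes {..<n}" and pi: "\<pi> = F p" by auto
      have "bij_betw (s0 \<circ> p) {..<n} S"
        using bij_betw_trans[OF permutes_imp_bij[OF p] s0] .
      then have "bij_betw \<pi> {..<n} S"
        unfolding pi F_def by (rule bij_betw_cong[THEN iffD1, rotated]) auto
      then show "\<pi> \<in> ?B" unfolding pi F_def by auto
    qed
  next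
    show "?B \<subseteq> F ` ?P"
    proof
      fix \<pi> assume pi: "\<pi> \<in> ?B"
      define p where "p j = (if j < n then inv_into {..<n} s0 (\<pi> j) else j)" for j
      have bp: "bij_betw (inv_into {..<n} s0 \<circ> \<pi>) {..<n} {..<n}"
        using bij_betw_trans[of \<pi> "{..<n}" S] pi bij_betw_inv_into[OF s0] by auto
      have "bij_betw p {..<n} {..<n}"
        using bp unfolding p_def by (rule bij_betw_cong[THEN iffD1, rotated]) auto
      then have pp: "p permutes {..<n}"
        by (rule bij_imp_permutes) (simp add: p_def)
      have "F p = \<pi>"
      proof
        fix j show "F p j = \<pi> j"
        proof (cases "j < n")
          case True
          then have "\<pi> j \<in> s0 ` {..<n}" using pi s0 by (auto simp: bij_betw_def)
          then show ?thesis using True by (simp add: F_def p_def f_inv_into_f)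
        next
          case False
          then show ?thesis using pi by (simp add: F_def extensional_def)
        qed
      qed
      then show "\<pi> \<in> F ` ?P" using pp by force
    qed
  qed
  have "card ?B = card ?P" using card_image[OF inj] img by simp
  also have "\<dots> = fact n" by (rule card_permutations) auto
  finally show ?thesis .
qed

lemma gram_reindex:
  assumes b: "bij_betw \<pi> {..<n} S"
  shows "gram (\<lambda>j\<in>{..<n}. X (\<pi> j)) {..<n} = gram X S"
proof -
  have "gram X S = (\<Sum>j\<in>{..<n}. outer (X (\<pi> j)) (X (\<pi> j)))"
    unfolding gram_def using sum.reindex_bij_betw[OF b, of "\<lambda>i. outer (X i) (X i)"] by simp
  then show ?thesis unfolding gram_def by simp
qed

lemma key_pointwise:
  fixes G s c f :: real and i :: ennreal
  assumes s: "0 \<le> s" and f: "0 < f" and G: "s \<noteq> 0 \<Longrightarrow> 0 < G"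
  shows "ennreal (G / c) * (ennreal (s / G / f) * i) = ennreal (1/(c*f)) * (ennreal s * i)"
proof (cases "s = 0")
  case True then show ?thesis by simp
next
  case False
  then have G: "0 < G" using G by blast
  show ?thesis
  proof (cases "0 < c")
    case True
    have "ennreal (G / c) * ennreal (s / G / f) = ennreal (G / c * (s / G / f))"
      using G True s f by (intro ennreal_mult[symmetric]) auto
    also have "G / c * (s / G / f) = 1/(c*f) * s" using G True f by (simp add: field_simps)
    also have "ennreal (1/(c*f) * s) = ennreal (1/(c*f)) * ennreal s"
      using True f s by (intro ennreal_mult) auto
    finally show ?thesis by (metis mult.assoc)
  next
    case False
    then have "c \<le> 0" by simp
    then have "G / c \<le> 0" "1/(c*f) \<le> 0" using G f
      by (simp_all add: divide_nonneg_nonpos mult_nonpos_nonneg)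
    then have "ennreal (G / c) = 0" "ennreal (1/(c*f)) = 0" by (simp_all add: ennreal_eq_0_iff)
    then show ?thesis by simp
  qed
qed

theorem lemma6:
  fixes D :: "(real^'d::finite) measure" and k :: nat
  assumes "prob_space D"
    and "sets D = sets borel"
    and "integrable D (\<lambda>x. norm x ^ 2)"
    and "invertible (second_moment D)"
    and "k \<ge> CARD('d)"
  shows "\<forall>A \<in> sets (PiM {..<CARD('d)} (\<lambda>_. D)).
    emeasure (VS D CARD('d)) A =
    (\<integral>\<^sup>+ X. (\<Sum>S \<in> {S. S \<subseteq> {..<k} \<and> card S = CARD('d)}.
        \<Sum>\<pi> \<in> {\<pi>. bij_betw \<pi> {..<CARD('d)} S \<and> \<pi> \<in> extensional {..<CARD('d)}}.
          ennreal ((det (submat X S))\<^sup>2 / det (gram X {..<k}) / fact CARD('d))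
          * indicator A (\<lambda>j\<in>{..<CARD('d)}. X (\<pi> j)))
     \<partial>VS D k)"
proof
  fix A assume A: "A \<in> sets (PiM {..<CARD('d)} (\<lambda>_. D))"
  let ?d = "CARD('d)"
  let ?Md = "PiM {..<CARD('d)} (\<lambda>_. D)"
  let ?Mk = "PiM {..<k} (\<lambda>_. D)"
  let ?Sg = "det (second_moment D)"
  let ?ck = "fact CARD('d) * real (k choose CARD('d)) * ?Sg"
  let ?fk = "\<lambda>X. ennreal (det (gram X {..<k}) / ?ck)"
  let ?SS = "{S. S \<subseteq> {..<k} \<and> card S = CARD('d)}"
  let ?B = "\<lambda>S. {\<pi>. bij_betw \<pi> {..<CARD('d)} S \<and> \<pi> \<in> extensional {..<CARD('d)}}"
  let ?P = "\<lambda>\<pi> X. (\<lambda>j\<in>{..<CARD('d)}. X (\<pi> j))"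
  let ?h = "\<lambda>Y. ennreal (det (gram Y {..<CARD('d)})) * indicator A Y"
  let ?J = "\<integral>\<^sup>+ Y. ?h Y \<partial>?Md"
  have compD: "(\<lambda>X. X l) \<in> borel_measurable (PiM K (\<lambda>_. D))" if "l \<in> K" for K l
  proof -
    have "(\<lambda>X. X l) \<in> PiM K (\<lambda>_. D) \<rightarrow>\<^sub>M D" using that by (rule measurable_component_singleton)
    then show ?thesis unfolding measurable_cong_sets[OF refl assms(2), of "PiM K (\<lambda>_. D)"] .
  qed
  have mg: "(\<lambda>X. det (gram X K)) \<in> borel_measurable (PiM K (\<lambda>_. D))" if "finite K" for K
    by (rule meas_det_gram[OF that compD])
  have mgd[measurable]: "(\<lambda>X. det (gram X {..<CARD('d)})) \<in> borel_measurable ?Md" by (rule mg) simp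
  have mgk[measurable]: "(\<lambda>X. det (gram X {..<k})) \<in> borel_measurable ?Mk" by (rule mg) simp
  note A[measurable]
  have mh: "?h \<in> borel_measurable ?Md" by measurable
  have bijSS: "bij_betw \<pi> {..<CARD('d)} S" "S \<subseteq> {..<k}" "finite S"
    if "S \<in> ?SS" "\<pi> \<in> ?B S" for S \<pi>
    using that finite_subset[of S "{..<k}"] by auto
  have mP: "?P \<pi> \<in> ?Mk \<rightarrow>\<^sub>M ?Md" if "S \<in> ?SS" "\<pi> \<in> ?B S" for S \<pi>
  proof (rule measurable_restrict)
    fix j assume "j \<in> {..<CARD('d)}"
    then have "\<pi> j \<in> {..<k}" using bijSS[OF that] bij_betwE by blast
    then show "(\<lambda>X. X (\<pi> j)) \<in> ?Mk \<rightarrow>\<^sub>M D" by (rule measurable_component_singleton)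
  qed
  have mhP: "(\<lambda>X. ?h (?P \<pi> X)) \<in> borel_measurable ?Mk" if "S \<in> ?SS" "\<pi> \<in> ?B S" for S \<pi>
    using measurable_compose[OF mP[OF that] mh] .
  have sdet: "det (gram (?P \<pi> X) {..<CARD('d)}) = (det (\<chi> r. X (\<pi> (idx r)) :: real^'d^'d))\<^sup>2"
    if "S \<in> ?SS" "\<pi> \<in> ?B S" for S \<pi> and X :: "nat \<Rightarrow> real^'d"
    using gram_reindex[OF bijSS(1)[OF that], of X] det_gram_sq[OF bijSS(1)[OF that], of X] by simp
  have sub: "(det (submat X S))\<^sup>2 = det (gram (?P \<pi> X) {..<CARD('d)})"
    if "S \<in> ?SS" "\<pi> \<in> ?B S" for S \<pi> and X :: "nat \<Rightarrow> real^'d"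
  proof -
    have bn: "bij_betw ((!) (sorted_list_of_set S)) {..<CARD('d)} S"
      by (rule bij_betw_nth) (use bijSS[OF that] that(1) in auto)
    show ?thesis
      using gram_reindex[OF bijSS(1)[OF that], of X] det_gram_sq[OF bn, of X]
      by (simp add: submat_def)
  qed
  have L: "emeasure (VS D CARD('d)) A = ennreal (1 / (fact CARD('d) * ?Sg)) * ?J"
  proof -
    have "emeasure (VS D CARD('d)) A
        = \<integral>\<^sup>+ Y. ennreal (det (gram Y {..<CARD('d)}) / (fact CARD('d) * real (CARD('d) choose CARD('d)) * ?Sg)) * indicator A Y \<partial>?Md"
    proof -
      have "(\<lambda>Y. ennreal (det (gram Y {..<CARD('d)}) / (fact CARD('d) * real (CARD('d) choose CARD('d)) * ?Sg)))
          \<in> borel_measurable ?Md" by measurable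
      from emeasure_density[OF this A] show ?thesis unfolding VS_def by simp
    qed
    also have "\<dots> = \<integral>\<^sup>+ Y. ennreal (1 / (fact CARD('d) * ?Sg)) * ?h Y \<partial>?Md"
    proof (rule nn_integral_cong)
      fix Y :: "nat \<Rightarrow> real^'d"
      have "0 \<le> det (gram Y {..<CARD('d)})"
        using det_gram_sq[OF bij_betw_id, of Y] by simp
      then have e: "ennreal (det (gram Y {..<CARD('d)}) / (fact CARD('d) * ?Sg))
            = ennreal (1 / (fact CARD('d) * ?Sg)) * ennreal (det (gram Y {..<CARD('d)}))"
        using ennreal_mult''[of "det (gram Y {..<CARD('d)})" "1 / (fact CARD('d) * ?Sg)"] by simp
      show "ennreal (det (gram Y {..<CARD('d)}) / (fact CARD('d) * real (CARD('d) choose CARD('d)) * ?Sg)) * indicator A Y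
          = ennreal (1 / (fact CARD('d) * ?Sg)) * ?h Y" using e by (simp add: mult.assoc)
    qed
    also have "\<dots> = ennreal (1 / (fact CARD('d) * ?Sg)) * ?J"
      by (rule nn_integral_cmult[OF mh])
    finally show ?thesis .
  qed
  have "(\<integral>\<^sup>+ X. (\<Sum>S \<in> ?SS. \<Sum>\<pi> \<in> ?B S.
          ennreal ((det (submat X S))\<^sup>2 / det (gram X {..<k}) / fact CARD('d))
          * indicator A (?P \<pi> X)) \<partial>VS D k)
      = (\<integral>\<^sup>+ X. (\<Sum>S \<in> ?SS. \<Sum>\<pi> \<in> ?B S.
          ennreal (det (gram (?P \<pi> X) {..<CARD('d)}) / det (gram X {..<k}) / fact CARD('d))
          * indicator A (?P \<pi> X)) \<partial>VS D k)"
    by (intro nn_integral_cong sum.cong refl) (simp add: sub)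
  also have "\<dots> = (\<integral>\<^sup>+ X. ?fk X * (\<Sum>S \<in> ?SS. \<Sum>\<pi> \<in> ?B S.
          ennreal (det (gram (?P \<pi> X) {..<CARD('d)}) / det (gram X {..<k}) / fact CARD('d))
          * indicator A (?P \<pi> X)) \<partial>?Mk)"
    unfolding VS_def
  proof (rule nn_integral_density)
    show "?fk \<in> borel_measurable ?Mk" by measurable
    show "(\<lambda>X. \<Sum>S \<in> ?SS. \<Sum>\<pi> \<in> ?B S.
          ennreal (det (gram (?P \<pi> X) {..<CARD('d)}) / det (gram X {..<k}) / fact CARD('d))
          * indicator A (?P \<pi> X)) \<in> borel_measurable ?Mk"
    proof (intro borel_measurable_sum)
      fix S \<pi> assume S: "S \<in> ?SS" and p: "\<pi> \<in> ?B S"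
      note mP[OF S p, measurable]
      show "(\<lambda>X. ennreal (det (gram (?P \<pi> X) {..<CARD('d)}) / det (gram X {..<k}) / fact CARD('d))
          * indicator A (?P \<pi> X)) \<in> borel_measurable ?Mk" by measurable
    qed
  qed
  also have "\<dots> = (\<integral>\<^sup>+ X. (\<Sum>S \<in> ?SS. \<Sum>\<pi> \<in> ?B S.
          ennreal (1 / (?ck * fact CARD('d))) * ?h (?P \<pi> X)) \<partial>?Mk)"
  proof (rule nn_integral_cong)
    fix X :: "nat \<Rightarrow> real^'d"
    show "?fk X * (\<Sum>S \<in> ?SS. \<Sum>\<pi> \<in> ?B S.
          ennreal (det (gram (?P \<pi> X) {..<CARD('d)}) / det (gram X {..<k}) / fact CARD('d))
          * indicator A (?P \<pi> X))
        = (\<Sum>S \<in> ?SS. \<Sum>\<pi> \<in> ?B S. ennreal (1 / (?ck * fact CARD('d))) * ?h (?P \<pi> X))"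
      unfolding sum_distrib_left
    proof (intro sum.cong refl)
      fix S \<pi> assume S: "S \<in> ?SS" and p: "\<pi> \<in> ?B S"
      show "?fk X * (ennreal (det (gram (?P \<pi> X) {..<CARD('d)}) / det (gram X {..<k}) / fact CARD('d))
          * indicator A (?P \<pi> X)) = ennreal (1 / (?ck * fact CARD('d))) * ?h (?P \<pi> X)"
      proof (rule key_pointwise)
        show "0 \<le> det (gram (?P \<pi> X) {..<CARD('d)})" using sdet[OF S p] by simp
        show "0 < (fact CARD('d) :: real)" by simp
        assume "det (gram (?P \<pi> X) {..<CARD('d)}) \<noteq> 0"
        then have "det (\<chi> r. X (\<pi> (idx r)) :: real^'d^'d) \<noteq> 0" using sdet[OF S p] by simp
        then show "0 < det (gram X {..<k})"
          using det_gram_pos[OF bijSS(1)[OF S p] bijSS(2)[OF S p]] by simp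
      qed
    qed
  qed
  also have "\<dots> = (\<Sum>S \<in> ?SS. \<Sum>\<pi> \<in> ?B S. ennreal (1 / (?ck * fact CARD('d))) * \<integral>\<^sup>+ X. ?h (?P \<pi> X) \<partial>?Mk)"
  proof -
    have mc: "(\<lambda>X. ennreal (1 / (?ck * fact CARD('d))) * ?h (?P \<pi> X)) \<in> borel_measurable ?Mk"
      if "S \<in> ?SS" "\<pi> \<in> ?B S" for S \<pi>
    proof -
      note mhP[OF that, measurable]
      show ?thesis by measurable
    qed
    have "(\<integral>\<^sup>+ X. (\<Sum>S \<in> ?SS. \<Sum>\<pi> \<in> ?B S. ennreal (1 / (?ck * fact CARD('d))) * ?h (?P \<pi> X)) \<partial>?Mk)
        = (\<Sum>S \<in> ?SS. \<integral>\<^sup>+ X. (\<Sum>\<pi> \<in> ?B S. ennreal (1 / (?ck * fact CARD('d))) * ?h (?P \<pi> X)) \<partial>?Mk)"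
      by (rule nn_integral_sum) (rule borel_measurable_sum, rule mc)
    also have "\<dots> = (\<Sum>S \<in> ?SS. \<Sum>\<pi> \<in> ?B S. \<integral>\<^sup>+ X. ennreal (1 / (?ck * fact CARD('d))) * ?h (?P \<pi> X) \<partial>?Mk)"
      by (intro sum.cong refl nn_integral_sum mc)
    also have "\<dots> = (\<Sum>S \<in> ?SS. \<Sum>\<pi> \<in> ?B S. ennreal (1 / (?ck * fact CARD('d))) * \<integral>\<^sup>+ X. ?h (?P \<pi> X) \<partial>?Mk)"
      by (intro sum.cong refl nn_integral_cmult mhP)
    finally show ?thesis .
  qed
  also have "\<dots> = (\<Sum>S \<in> ?SS. \<Sum>\<pi> \<in> ?B S. ennreal (1 / (?ck * fact CARD('d))) * ?J)"
  proof (intro sum.cong refl arg_cong2[where f="(*)"])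
    fix S \<pi> assume S: "S \<in> ?SS" and p: "\<pi> \<in> ?B S"
    have "distr ?Mk ?Md (?P \<pi>) = ?Md"
      using distr_PiM_reindex[of "{..<k}" "\<lambda>_. D" \<pi> "{..<CARD('d)}"] assms(1)
        bijSS[OF S p] by (auto simp: bij_betw_def)
    then show "\<integral>\<^sup>+ X. ?h (?P \<pi> X) \<partial>?Mk = ?J"
      using nn_integral_distr[OF mP[OF S p], of ?h] mh by simp
  qed
  also have "\<dots> = of_nat (k choose CARD('d)) * (of_nat (fact CARD('d)) * (ennreal (1 / (?ck * fact CARD('d))) * ?J))"
  proof -
    have "(\<Sum>\<pi> \<in> ?B S. ennreal (1 / (?ck * fact CARD('d))) * ?J) = of_nat (fact CARD('d)) * (ennreal (1 / (?ck * fact CARD('d))) * ?J)"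
      if "S \<in> ?SS" for S
    proof -
      have fS: "finite S" using that by (auto intro: finite_subset)
      have "card (?B S) = fact CARD('d)" using card_bij_ext[OF fS] that by simp
      then show ?thesis by simp
    qed
    then have "(\<Sum>S \<in> ?SS. \<Sum>\<pi> \<in> ?B S. ennreal (1 / (?ck * fact CARD('d))) * ?J)
        = (\<Sum>S \<in> ?SS. of_nat (fact CARD('d)) * (ennreal (1 / (?ck * fact CARD('d))) * ?J))"
      by (intro sum.cong) auto
    also have "\<dots> = of_nat (card ?SS) * (of_nat (fact CARD('d)) * (ennreal (1 / (?ck * fact CARD('d))) * ?J))"
      by simp
    also have "card ?SS = k choose CARD('d)" using n_subsets[of "{..<k}" "CARD('d)"] by simp
    finally show ?thesis .
  qed
  also have "\<dots> = ennreal (1 / (fact CARD('d) * ?Sg)) * ?J"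
  proof -
    have pos: "0 < real (k choose CARD('d))" using assms(5) by simp
    have r: "real (k choose CARD('d)) * (fact CARD('d) * (1 / (?ck * fact CARD('d)))) = 1 / (fact CARD('d) * ?Sg)"
      using pos by (cases "?Sg = 0") (simp_all add: field_simps)
    have "(of_nat (k choose CARD('d)) :: ennreal) * (of_nat (fact CARD('d)) * (ennreal (1 / (?ck * fact CARD('d))) * ?J))
        = ennreal (real (k choose CARD('d))) * (ennreal (fact CARD('d)) * ennreal (1 / (?ck * fact CARD('d)))) * ?J"
      by (simp add: ennreal_of_nat_eq_real_of_nat mult.assoc of_nat_fact)
    also have "\<dots> = ennreal (real (k choose CARD('d)) * (fact CARD('d) * (1 / (?ck * fact CARD('d))))) * ?J"
    proof -
      have "ennreal (fact CARD('d)) * ennreal (1 / (?ck * fact CARD('d))) = ennreal (fact CARD('d) * (1 / (?ck * fact CARD('d))))"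
        by (rule ennreal_mult'[symmetric]) simp
      moreover have "ennreal (real (k choose CARD('d))) * ennreal (fact CARD('d) * (1 / (?ck * fact CARD('d))))
          = ennreal (real (k choose CARD('d)) * (fact CARD('d) * (1 / (?ck * fact CARD('d)))))"
        by (rule ennreal_mult'[symmetric]) simp
      ultimately show ?thesis by simp
    qed
    finally show ?thesis using r by simp
  qed
  finally show "emeasure (VS D CARD('d)) A = (\<integral>\<^sup>+ X. (\<Sum>S \<in> ?SS. \<Sum>\<pi> \<in> ?B S.
          ennreal ((det (submat X S))\<^sup>2 / det (gram X {..<k}) / fact CARD('d))
          * indicator A (?P \<pi> X)) \<partial>VS D k)" using L by simp
qed

end
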